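(* Let $x_1,x_2,\dots$ be i.i.d. random variables with values in $[-R,R]$, $\beta>0$, $\hat\rho_n=\frac1\beta\ln\big(\frac1n\sum_{t=1}^n\exp(\beta x_t)\big)$, and $\mu=\lim_{n\to\infty}\mathbb{E}[\hat\rho_n]=\frac1\beta\ln\mathbb{E}[\exp(\beta x_1)]$. Then there exist constants $\theta>1$, $\xi>1$ and $1/2\le\eta<1$ such that for any $z\ge1$ and $n\in\mathbb{N}$, $$\mathbb{P}[n\hat\rho_n-n\mu\ge n^\eta z]\le\frac{\theta}{z^\xi},\qquad \mathbb{P}[n\hat\rho_n-n\mu\le -n^\eta z]\le\frac{\theta}{z^\xi}.$$ *)

theory Defs
  imports "HOL-Probability.Probability"
begin

text \<open>Empirical entropic risk estimator
  rho_hat_n = (1/beta) ln((1/n) sum_{t=1}^n exp(beta x_t)); the sequence is indexed from 0,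
  so x_1,...,x_n correspond to X 0, ..., X (n-1).\<close>
definition rho_hat :: "real \<Rightarrow> (nat \<Rightarrow> 'a \<Rightarrow> real) \<Rightarrow> nat \<Rightarrow> 'a \<Rightarrow> real" where
  "rho_hat \<beta> X n \<omega> = (1 / \<beta>) * ln ((1 / real n) * (\<Sum>t<n. exp (\<beta> * X t \<omega>)))"

end

theory Submission
  imports Defs
begin

lemma up_aux:
  fixes n m S \<beta> z :: real
  assumes n: "n > 0" and m: "m > 0" and S: "S > 0" and b: "\<beta> > 0"
    and h: "n * ((1 / \<beta>) * ln ((1 / n) * S)) - n * ((1 / \<beta>) * ln m) \<ge> sqrt n * z"
  shows "S \<ge> n * m + m * \<beta> * z * sqrt n"
proof -
  define l where "l = ln (S / (n * m))"
  have l: "ln ((1 / n) * S) - ln m = l"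
    unfolding l_def using n m S by (simp add: ln_div ln_mult)
  have "n * ((1 / \<beta>) * ln ((1 / n) * S)) - n * ((1 / \<beta>) * ln m) = n * l / \<beta>"
    using l by (simp add: algebra_simps diff_divide_distrib[symmetric])
  with h have "n * l / \<beta> \<ge> sqrt n * z" by simp
  hence "n * l \<ge> sqrt n * z * \<beta>" using b by (simp add: pos_le_divide_eq)
  moreover have "n = sqrt n * sqrt n" using n by simp
  ultimately have "sqrt n * (sqrt n * l) \<ge> sqrt n * (z * \<beta>)" by (simp add: algebra_simps)
  hence l2: "sqrt n * l \<ge> z * \<beta>" using n by (simp add: mult_le_cancel_left)
  have "l \<le> S / (n * m) - 1" unfolding l_def by (rule ln_le_minus_one) (use n m S in simp)
  hence "sqrt n * l \<le> sqrt n * (S / (n * m) - 1)" using n by (simp add: mult_left_mono)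
  with l2 have "z * \<beta> \<le> sqrt n * (S / (n * m) - 1)" by linarith
  hence "z * \<beta> * (sqrt n * m) \<le> sqrt n * (S / (n * m) - 1) * (sqrt n * m)"
    using n m by (simp add: mult_right_mono)
  also have "\<dots> = S - n * m" using n m by (simp add: field_simps)
  finally show ?thesis by (simp add: algebra_simps)
qed

lemma low_aux:
  fixes n m S \<beta> z a :: real
  assumes n: "n > 0" and m: "m > 0" and a: "a > 0" and Sa: "S \<ge> n * a" and b: "\<beta> > 0"
    and z: "z \<ge> 0"
    and h: "n * ((1 / \<beta>) * ln ((1 / n) * S)) - n * ((1 / \<beta>) * ln m) \<le> - (sqrt n * z)"
  shows "S \<le> n * m - a * \<beta> * z * sqrt n"
proof -
  have S: "S > 0" using Sa n a by (smt (verit) mult_pos_pos)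
  define l where "l = ln (S / (n * m))"
  have l: "ln ((1 / n) * S) - ln m = l"
    unfolding l_def using n m S by (simp add: ln_div ln_mult)
  have "n * ((1 / \<beta>) * ln ((1 / n) * S)) - n * ((1 / \<beta>) * ln m) = n * l / \<beta>"
    using l by (simp add: algebra_simps diff_divide_distrib[symmetric])
  with h have "n * l / \<beta> \<le> - (sqrt n * z)" by simp
  hence "n * l \<le> - (sqrt n * z) * \<beta>" using b by (simp add: divide_le_eq)
  moreover have "n = sqrt n * sqrt n" using n by simp
  ultimately have "sqrt n * (sqrt n * l) \<le> sqrt n * (- z * \<beta>)" by (simp add: algebra_simps)
  hence l2: "sqrt n * l \<le> - z * \<beta>" using n
    by (metis mult_le_cancel_left_pos real_sqrt_gt_0_iff mult_minus_right)
  have "ln ((n * m) / S) \<le> (n * m) / S - 1" by (rule ln_le_minus_one) (use n m S in simp)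
  moreover have "ln ((n * m) / S) = - l" unfolding l_def using n m S by (simp add: ln_div)
  ultimately have "1 - (n * m) / S \<le> l" by linarith
  hence "sqrt n * (1 - (n * m) / S) \<le> sqrt n * l" using n by (simp add: mult_left_mono)
  with l2 have "sqrt n * (1 - (n * m) / S) \<le> - z * \<beta>" by linarith
  hence "sqrt n * (1 - (n * m) / S) * S \<le> - z * \<beta> * S" using S
    by (metis less_eq_real_def mult_right_mono)
  moreover have "sqrt n * (1 - (n * m) / S) * S = sqrt n * (S - n * m)" using S
    by (simp add: field_simps)
  ultimately have "sqrt n * (S - n * m) \<le> - z * \<beta> * S" by simp
  also have "- z * \<beta> * S \<le> - z * \<beta> * (n * a)"
    using Sa z b by (simp add: mult_left_mono)
  finally have "sqrt n * (S - n * m) \<le> sqrt n * (- z * \<beta> * sqrt n * a)"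
    using n by (simp add: algebra_simps)
  hence "S - n * m \<le> - z * \<beta> * sqrt n * a" using n
    by (metis mult_le_cancel_left_pos real_sqrt_gt_0_iff)
  thus ?thesis by (simp add: algebra_simps)
qed


lemma exp_tail_aux:
  fixes K z :: real
  assumes "K > 0" "z \<ge> 1"
  shows "exp (- (K * z\<^sup>2)) \<le> (1 / K) / z\<^sup>2"
proof -
  have pos: "K * z\<^sup>2 > 0" using assms by simp
  have "K * z\<^sup>2 \<le> exp (K * z\<^sup>2)" using exp_ge_add_one_self[of "K * z\<^sup>2"] by linarith
  hence "1 \<le> exp (K * z\<^sup>2) / (K * z\<^sup>2)" using pos by simp
  hence "exp (- (K * z\<^sup>2)) \<le> 1 / (K * z\<^sup>2)"
    using pos by (simp add: exp_minus field_simps)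
  thus ?thesis by simp
qed

theorem lemma9:
  fixes M :: "'a measure" and X :: "nat \<Rightarrow> 'a \<Rightarrow> real" and R \<beta> :: real
  assumes "prob_space M"
    and meas: "\<And>i. X i \<in> borel_measurable M"
    and indep: "prob_space.indep_vars M (\<lambda>_. borel) X UNIV"
    and ident: "\<And>i. distr M borel (X i) = distr M borel (X 0)"
    and bounded: "\<And>i \<omega>. \<omega> \<in> space M \<Longrightarrow> X i \<omega> \<in> {-R..R}"
    and "\<beta> > 0"
  defines "\<mu> \<equiv> (1 / \<beta>) * ln (prob_space.expectation M (\<lambda>\<omega>. exp (\<beta> * X 0 \<omega>)))"
  shows "\<exists>\<theta> \<xi> \<eta> :: real. \<theta> > 1 \<and> \<xi> > 1 \<and> 1/2 \<le> \<eta> \<and> \<eta> < 1 \<and>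
           (\<forall>z \<ge> 1. \<forall>n \<ge> 1.
              measure M {\<omega> \<in> space M. real n * rho_hat \<beta> X n \<omega> - real n * \<mu> \<ge> real n powr \<eta> * z}
                \<le> \<theta> / z powr \<xi> \<and>
              measure M {\<omega> \<in> space M. real n * rho_hat \<beta> X n \<omega> - real n * \<mu> \<le> - (real n powr \<eta> * z)}
                \<le> \<theta> / z powr \<xi>)"
proof -
  interpret P: prob_space M by fact
  note meas[measurable]
  have bp: "\<beta> > 0" by fact
  define R' where "R' = \<bar>R\<bar> + 1"
  define a where "a = exp (- (\<beta> * R'))"
  define b where "b = exp (\<beta> * R')"
  define Y where "Y = (\<lambda>t \<omega>. exp (\<beta> * X t \<omega>))"
  have Ymeas[measurable]: "Y t \<in> borel_measurable M" for t unfolding Y_def by measurable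
  have apos: "a > 0" unfolding a_def by simp
  have ab: "a < b" unfolding a_def b_def R'_def using bp by simp
  have Ybnd: "Y t \<omega> \<in> {a..b}" if "\<omega> \<in> space M" for t \<omega>
  proof -
    have "X t \<omega> \<in> {-R..R}" using bounded that by blast
    hence r: "- R' \<le> X t \<omega>" "X t \<omega> \<le> R'" unfolding R'_def by auto
    have "\<beta> * (- R') \<le> \<beta> * X t \<omega>" by (rule mult_left_mono[OF r(1)]) (use bp in simp)
    moreover have "\<beta> * X t \<omega> \<le> \<beta> * R'" by (rule mult_left_mono[OF r(2)]) (use bp in simp)
    ultimately have "- (\<beta> * R') \<le> \<beta> * X t \<omega> \<and> \<beta> * X t \<omega> \<le> \<beta> * R'" by simp
    thus ?thesis unfolding Y_def a_def b_def by auto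
  qed
  have indepY: "P.indep_vars (\<lambda>_. borel) Y UNIV"
    unfolding Y_def by (rule P.indep_vars_compose2[OF indep]) measurable
  have identY: "distr M borel (Y i) = distr M borel (Y 0)" for i
  proof -
    have "distr M borel (Y i) = distr (distr M borel (X i)) borel (\<lambda>x. exp (\<beta> * x))"
      unfolding Y_def by (subst distr_distr) (auto simp: comp_def)
    also have "\<dots> = distr (distr M borel (X 0)) borel (\<lambda>x. exp (\<beta> * x))" by (simp only: ident[of i])
    also have "\<dots> = distr M borel (Y 0)"
      unfolding Y_def by (subst distr_distr) (auto simp: comp_def)
    finally show ?thesis .
  qed
  define m where "m = P.expectation (Y 0)"
  have intY: "integrable M (Y 0)"
  proof -
    have "AE x in M. norm (Y 0 x) \<le> b"
    proof (rule AE_I2)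
      fix x assume "x \<in> space M"
      hence "Y 0 x \<in> {a..b}" by (rule Ybnd)
      thus "norm (Y 0 x) \<le> b" using apos by auto
    qed
    thus ?thesis by (rule P.integrable_const_bound) simp
  qed
  have ma: "m \<ge> a"
  proof -
    have "P.expectation (\<lambda>_. a) \<le> m"
      unfolding m_def by (rule integral_mono) (use intY Ybnd in auto)
    thus ?thesis by (simp add: P.prob_space)
  qed
  have mpos: "m > 0" using ma apos by simp
  have mu: "\<mu> = (1 / \<beta>) * ln m" unfolding \<mu>_def m_def Y_def ..
  define K where "K = 2 * a\<^sup>2 * \<beta>\<^sup>2 / (b - a)\<^sup>2"
  have Kpos: "K > 0" unfolding K_def using apos ab bp by simp
  define \<theta> where "\<theta> = max 2 (1 / K)"
  have main: "measure M {\<omega> \<in> space M. real n * rho_hat \<beta> X n \<omega> - real n * \<mu> \<ge> real n powr (1/2) * z}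
                \<le> \<theta> / z powr 2 \<and>
              measure M {\<omega> \<in> space M. real n * rho_hat \<beta> X n \<omega> - real n * \<mu> \<le> - (real n powr (1/2) * z)}
                \<le> \<theta> / z powr 2" if z: "z \<ge> 1" and n: "n \<ge> 1" for z :: real and n :: nat
  proof -
    interpret H: Hoeffding_ineq_iid M "{..<n}" Y "Y 0" a b m
    proof unfold_locales
      show "P.indep_vars (\<lambda>_. borel) Y {..<n}" by (rule P.indep_vars_subset[OF indepY]) auto
      show "distr M borel (Y i) = distr M borel (Y 0)" if "i \<in> {..<n}" for i by (rule identY)
      show "AE x in M. Y 0 x \<in> {a..b}" using Ybnd by auto
      show "m \<equiv> P.expectation (Y 0)" unfolding m_def .
    qed auto
    have ne: "{..<n} \<noteq> {}" using n by (simp add: lessThan_empty_iff)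
    have rn: "real n > 0" using n by simp
    have zp: "z powr 2 = z\<^sup>2" using z by (simp add: powr_numeral)
    have sq: "real n powr (1/2) = sqrt (real n)" by (simp add: powr_half_sqrt)
    have fin: "exp (- (K * z\<^sup>2)) \<le> \<theta> / z powr 2"
    proof -
      have "exp (- (K * z\<^sup>2)) \<le> (1 / K) / z\<^sup>2" by (rule exp_tail_aux[OF Kpos z])
      also have "\<dots> \<le> \<theta> / z\<^sup>2" unfolding \<theta>_def by (rule divide_right_mono) auto
      finally show ?thesis by (simp add: zp)
    qed
    have rho: "rho_hat \<beta> X n \<omega> = (1 / \<beta>) * ln ((1 / real n) * (\<Sum>t<n. Y t \<omega>))" for \<omega>
      unfolding rho_hat_def Y_def ..
    have Spos: "(\<Sum>t<n. Y t \<omega>) \<ge> real n * a" if "\<omega> \<in> space M" for \<omega>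
    proof -
      have "(\<Sum>t<n. a) \<le> (\<Sum>t<n. Y t \<omega>)" by (rule sum_mono) (use Ybnd that in auto)
      thus ?thesis by simp
    qed
    define \<epsilon>1 where "\<epsilon>1 = m * \<beta> * z * sqrt (real n)"
    define \<epsilon>2 where "\<epsilon>2 = a * \<beta> * z * sqrt (real n)"
    have e1: "\<epsilon>1 \<ge> 0" unfolding \<epsilon>1_def using mpos bp z by simp
    have e2: "\<epsilon>2 \<ge> 0" unfolding \<epsilon>2_def using apos bp z by simp
    note H1 = H.Hoeffding_ineq_ge[OF e1 ab ne]
    note H2 = H.Hoeffding_ineq_le[OF e2 ab ne]
    have sqn: "(sqrt (real n))\<^sup>2 = real n" by simp
    have b1: "exp (-2 * \<epsilon>1\<^sup>2 / (real (card {..<n}) * (b - a)\<^sup>2)) \<le> exp (- (K * z\<^sup>2))"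
    proof -
      have "K * z\<^sup>2 \<le> 2 * \<epsilon>1\<^sup>2 / (real n * (b - a)\<^sup>2)"
      proof -
        have "a\<^sup>2 \<le> m\<^sup>2" using ma apos by (simp add: power_mono)
        hence "2 * a\<^sup>2 * \<beta>\<^sup>2 * z\<^sup>2 \<le> 2 * m\<^sup>2 * \<beta>\<^sup>2 * z\<^sup>2" by (simp add: mult_right_mono)
        hence "K * z\<^sup>2 \<le> 2 * m\<^sup>2 * \<beta>\<^sup>2 * z\<^sup>2 / (b - a)\<^sup>2" unfolding K_def
          by (simp add: divide_right_mono)
        also have "\<dots> = 2 * \<epsilon>1\<^sup>2 / (real n * (b - a)\<^sup>2)"
          unfolding \<epsilon>1_def using rn by (simp add: power_mult_distrib)
        finally show ?thesis .
      qed
      thus ?thesis by simp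
    qed
    have b2: "exp (-2 * \<epsilon>2\<^sup>2 / (real (card {..<n}) * (b - a)\<^sup>2)) \<le> exp (- (K * z\<^sup>2))"
    proof -
      have "K * z\<^sup>2 = 2 * \<epsilon>2\<^sup>2 / (real n * (b - a)\<^sup>2)"
        unfolding \<epsilon>2_def K_def using rn by (simp add: power_mult_distrib)
      thus ?thesis by simp
    qed
    have s1: "{\<omega> \<in> space M. real n * rho_hat \<beta> X n \<omega> - real n * \<mu> \<ge> real n powr (1/2) * z}
      \<subseteq> {x\<in>space M. (\<Sum>i\<in>{..<n}. Y i x) \<ge> real (card {..<n}) * m + \<epsilon>1}"
    proof safe
      fix \<omega> assume w: "\<omega> \<in> space M"
        and h: "real n powr (1/2) * z \<le> real n * rho_hat \<beta> X n \<omega> - real n * \<mu>"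
      have "(\<Sum>t<n. Y t \<omega>) > 0" using Spos[OF w] rn apos
        by (smt (verit) mult_pos_pos)
      from up_aux[OF rn mpos this bp] h show "real (card {..<n}) * m + \<epsilon>1 \<le> (\<Sum>i\<in>{..<n}. Y i \<omega>)"
        unfolding \<epsilon>1_def by (simp add: rho mu sq)
    qed
    have s2: "{\<omega> \<in> space M. real n * rho_hat \<beta> X n \<omega> - real n * \<mu> \<le> - (real n powr (1/2) * z)}
      \<subseteq> {x\<in>space M. (\<Sum>i\<in>{..<n}. Y i x) \<le> real (card {..<n}) * m - \<epsilon>2}"
    proof safe
      fix \<omega> assume w: "\<omega> \<in> space M"
        and h: "real n * rho_hat \<beta> X n \<omega> - real n * \<mu> \<le> - (real n powr (1/2) * z)"
      from low_aux[OF rn mpos apos Spos[OF w] bp] h z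
      show "(\<Sum>i\<in>{..<n}. Y i \<omega>) \<le> real (card {..<n}) * m - \<epsilon>2"
        unfolding \<epsilon>2_def by (simp add: rho mu sq)
    qed
    have "measure M {\<omega> \<in> space M. real n * rho_hat \<beta> X n \<omega> - real n * \<mu> \<ge> real n powr (1/2) * z}
      \<le> measure M {x\<in>space M. (\<Sum>i\<in>{..<n}. Y i x) \<ge> real (card {..<n}) * m + \<epsilon>1}"
      by (rule P.finite_measure_mono[OF s1]) measurable
    moreover have "measure M {\<omega> \<in> space M. real n * rho_hat \<beta> X n \<omega> - real n * \<mu> \<le> - (real n powr (1/2) * z)}
      \<le> measure M {x\<in>space M. (\<Sum>i\<in>{..<n}. Y i x) \<le> real (card {..<n}) * m - \<epsilon>2}"
      by (rule P.finite_measure_mono[OF s2]) measurable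
    ultimately show ?thesis using H1 H2 b1 b2 fin by linarith
  qed
  show ?thesis
    by (rule exI[of _ \<theta>], rule exI[of _ 2], rule exI[of _ "1/2"]) (use main in \<open>auto simp: \<theta>_def\<close>)
qed

end
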